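(* Let $M$ be a matroid whose ground set $E$ is a nonempty finite subset of $\mathbb{N}$, and let $m = m(M) = \max E$. If $m$ is neither a loop nor a coloop of $M$, then \[ \mathcal{S}_{\mathsf{lex}}(M) \;=\; \mathcal{S}_{\mathsf{lex}}(M \backslash m)\;\cup\;\mathcal{S}_{\mathsf{lex}}(M/m)\;\cup\;\Big(m \ast \big(\mathcal{S}_{\mathsf{lex}}(M\backslash m)\cap \mathcal{S}_{\mathsf{lex}}(M/m)\big)\Big). \] If $m$ is a coloop, then $\mathcal{S}_{\mathsf{lex}}(M) = \mathcal{S}_{\mathsf{lex}}(M\backslash m)$, and if $m$ is a loop, then $\mathcal{S}_{\mathsf{lex}}(M) = \mathcal{S}_{\mathsf{lex}}(M/m)$.
   Context: For a matroid $M$ on a finite ground set $E \subset \mathbb{N}$ with set of bases $\mathcal{B}(M)$, its basis configuration is $V_M = \{\mathbf{e}_B : B \in \mathcal{B}(M)\}\subseteq\{0,1\}^E$, where $\mathbf{e}_B$ is the characteristic vector of $B$. Let $I(V_M)\subseteq \mathbb{R}[x_e : e\in E]$ be the vanishing ideal of $V_M$, and use the lexicographic term order with $x_e \succ x_f$ whenever $e<f$ (i.e. $\mathbf{x}^\alpha\succ\mathbf{x}^\beta$ iff at the smallest index where $\alpha$ and $\beta$ differ, $\alpha$ is larger). The lexicographic standard complex is $\mathcal{S}_{\mathsf{lex}}(M) = \{\tau\subseteq E : \mathbf{x}^\tau=\prod_{i\in\tau}x_i \notin \mathrm{in}(I(V_M))\}$, where $\mathrm{in}(I)$ is the initial ideal.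 (If $E=\emptyset$, $\mathcal{S}_{\mathsf{lex}}(M)=\{\emptyset\}$.) $M\backslash m$ and $M/m$ denote deletion and contraction of $m$ (matroids on $E\setminus\{m\}$). For a simplicial complex $K$ and a vertex $v$ not in $K$, the cone is $v\ast K = K\cup\{\sigma\cup\{v\}:\sigma\in K\}$. *)

theory Defs
  imports Complex_Main "HOL-Library.Poly_Mapping"
begin

definition matroid_bases :: "nat set \<Rightarrow> nat set set \<Rightarrow> bool" where
  "matroid_bases E \<B> \<longleftrightarrow> finite E \<and> \<B> \<noteq> {} \<and> (\<forall>B\<in>\<B>. B \<subseteq> E) \<and>
     (\<forall>B1\<in>\<B>. \<forall>B2\<in>\<B>. \<forall>x\<in>B1 - B2. \<exists>y\<in>B2 - B1. insert y (B1 - {x}) \<in> \<B>)"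

definition is_loop :: "nat set set \<Rightarrow> nat \<Rightarrow> bool" where
  "is_loop \<B> e \<longleftrightarrow> (\<forall>B\<in>\<B>. e \<notin> B)"

definition is_coloop :: "nat set set \<Rightarrow> nat \<Rightarrow> bool" where
  "is_coloop \<B> e \<longleftrightarrow> (\<forall>B\<in>\<B>. e \<in> B)"

definition del_bases :: "nat set set \<Rightarrow> nat \<Rightarrow> nat set set" where
  "del_bases \<B> e = (if is_coloop \<B> e then (\<lambda>B. B - {e}) ` \<B> else {B\<in>\<B>. e \<notin> B})"

definition con_bases :: "nat set set \<Rightarrow> nat \<Rightarrow> nat set set" where
  "con_bases \<B> e = (if is_loop \<B> e then \<B> else (\<lambda>B. B - {e}) ` {B\<in>\<B>. e \<in> B})"

type_synonym mpoly = "(nat \<Rightarrow>\<^sub>0 nat) \<Rightarrow>\<^sub>0 real"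

definition poly_ring :: "nat set \<Rightarrow> mpoly set" where
  "poly_ring E = {p. \<forall>\<alpha>\<in>Poly_Mapping.keys p. Poly_Mapping.keys \<alpha> \<subseteq> E}"

definition eval_poly :: "mpoly \<Rightarrow> (nat \<Rightarrow> real) \<Rightarrow> real" where
  "eval_poly p v = (\<Sum>\<alpha>\<in>Poly_Mapping.keys p. Poly_Mapping.lookup p \<alpha> * (\<Prod>i\<in>Poly_Mapping.keys \<alpha>. v i ^ Poly_Mapping.lookup \<alpha> i))"

definition char_vec :: "nat set \<Rightarrow> nat \<Rightarrow> real" where
  "char_vec B i = (if i \<in> B then 1 else 0)"

definition vanishing_ideal :: "nat set \<Rightarrow> nat set set \<Rightarrow> mpoly set" where
  "vanishing_ideal E \<B> = {p \<in> poly_ring E. \<forall>B\<in>\<B>. eval_poly p (char_vec B) = 0}"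

text \<open>Lexographic term order: the library order on exponent vectors (less_fun):
  alpha < beta iff at the smallest index where they differ, beta is larger.
  Hence x_e is larger than x_f whenever e < f.\<close>
definition lead_exp :: "mpoly \<Rightarrow> (nat \<Rightarrow>\<^sub>0 nat)" where
  "lead_exp p = Max (Poly_Mapping.keys p)"

definition monom :: "(nat \<Rightarrow>\<^sub>0 nat) \<Rightarrow> mpoly" where
  "monom \<alpha> = Poly_Mapping.single \<alpha> 1"

definition initial_ideal :: "nat set \<Rightarrow> mpoly set \<Rightarrow> mpoly set" where
  "initial_ideal E I = {(\<Sum>j<(n::nat). q j * monom (lead_exp (f j))) | n q f.
      (\<forall>j<n. q j \<in> poly_ring E \<and> f j \<in> I \<and> f j \<noteq> 0)}"

definition set_monom :: "nat set \<Rightarrow> mpoly" where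
  "set_monom \<tau> = monom (\<Sum>i\<in>\<tau>. Poly_Mapping.single i 1)"

definition lex_standard_complex :: "nat set \<Rightarrow> nat set set \<Rightarrow> nat set set" where
  "lex_standard_complex E \<B> =
     {\<tau>. \<tau> \<subseteq> E \<and> set_monom \<tau> \<notin> initial_ideal E (vanishing_ideal E \<B>)}"

definition cone :: "nat \<Rightarrow> nat set set \<Rightarrow> nat set set" where
  "cone v K = K \<union> {insert v \<sigma> | \<sigma>. \<sigma> \<in> K}"

end

theory Submission
  imports Defs
begin


definition chi :: "nat set \<Rightarrow> nat set \<Rightarrow> real" where
  "chi \<sigma> B = (if \<sigma> \<subseteq> B then 1 else 0)"

definition setless :: "nat set \<Rightarrow> nat set \<Rightarrow> bool" where
  "setless \<sigma> \<tau> \<longleftrightarrow> (\<exists>k. k \<in> \<tau> \<and> k \<notin> \<sigma> \<and> (\<forall>j<k. j \<in> \<sigma> \<longleftrightarrow> j \<in> \<tau>))"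

definition LL :: "nat set \<Rightarrow> nat set \<Rightarrow> nat set set" where
  "LL E \<tau> = {\<sigma>. \<sigma> \<subseteq> E \<and> setless \<sigma> \<tau>}"

definition dep :: "nat set set \<Rightarrow> nat set \<Rightarrow> nat set \<Rightarrow> bool" where
  "dep V E \<tau> \<longleftrightarrow> (\<exists>c. \<forall>B\<in>V. chi \<tau> B = (\<Sum>\<sigma>\<in>LL E \<tau>. c \<sigma> * chi \<sigma> B))"

lemma setless_irrefl: "\<not> setless \<sigma> \<sigma>"
  unfolding setless_def by auto

lemma finite_LL: "finite E \<Longrightarrow> finite (LL E \<tau>)"
  unfolding LL_def by (rule finite_subset[of _ "Pow E"]) auto

lemma setless_split:
  assumes fin: "finite E" and m: "m = Max E" and s: "\<sigma> \<subseteq> E" and t: "\<tau> \<subseteq> E"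
  shows "setless \<sigma> \<tau> \<longleftrightarrow> setless (\<sigma>-{m}) (\<tau>-{m}) \<or> (\<sigma>-{m} = \<tau>-{m} \<and> m \<notin> \<sigma> \<and> m \<in> \<tau>)"
proof
  have le: "x \<le> m" if "x \<in> E" for x using Max_ge[OF fin that] m by simp
  assume "setless \<sigma> \<tau>"
  then obtain k where k: "k \<in> \<tau>" "k \<notin> \<sigma>" "\<forall>j<k. j \<in> \<sigma> \<longleftrightarrow> j \<in> \<tau>"
    unfolding setless_def by blast
  have km: "k \<le> m" using k(1) t le by blast
  show "setless (\<sigma>-{m}) (\<tau>-{m}) \<or> (\<sigma>-{m} = \<tau>-{m} \<and> m \<notin> \<sigma> \<and> m \<in> \<tau>)"
  proof (cases "k = m")
    case True
    have "\<sigma>-{m} = \<tau>-{m}"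
    proof (intro set_eqI iffI)
      fix x assume x: "x \<in> \<sigma>-{m}"
      then have "x \<le> m" "x \<noteq> m" using s le by auto
      then have "x < m" by simp
      then show "x \<in> \<tau>-{m}" using k(3) True x by blast
    next
      fix x assume x: "x \<in> \<tau>-{m}"
      then have "x \<le> m" "x \<noteq> m" using t le by auto
      then have "x < m" by simp
      then show "x \<in> \<sigma>-{m}" using k(3) True x by blast
    qed
    then show ?thesis using True k by auto
  next
    case False
    then have "k < m" using km by simp
    then have "setless (\<sigma>-{m}) (\<tau>-{m})" unfolding setless_def using k False
      by (intro exI[of _ k]) auto
    then show ?thesis by blast
  qed
next
  have le: "x \<le> m" if "x \<in> E" for x using Max_ge[OF fin that] m by simp
  assume "setless (\<sigma>-{m}) (\<tau>-{m}) \<or> (\<sigma>-{m} = \<tau>-{m} \<and> m \<notin> \<sigma> \<and> m \<in> \<tau>)"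
  then show "setless \<sigma> \<tau>"
  proof
    assume "setless (\<sigma>-{m}) (\<tau>-{m})"
    then obtain k where k: "k \<in> \<tau>-{m}" "k \<notin> \<sigma>-{m}" "\<forall>j<k. j \<in> \<sigma>-{m} \<longleftrightarrow> j \<in> \<tau>-{m}"
      unfolding setless_def by blast
    have "k \<le> m" "k \<noteq> m" using k(1) t le by auto
    then have "k < m" by simp
    then show ?thesis unfolding setless_def using k by (intro exI[of _ k]) auto
  next
    assume h: "\<sigma>-{m} = \<tau>-{m} \<and> m \<notin> \<sigma> \<and> m \<in> \<tau>"
    show ?thesis unfolding setless_def
    proof (intro exI[of _ m] conjI allI impI)
      fix j assume "j < m"
      then show "j \<in> \<sigma> \<longleftrightarrow> j \<in> \<tau>" using h by blast
    qed (use h in auto)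
  qed
qed

locale split_setup =
  fixes E :: "nat set" and m :: nat
  assumes fin: "finite E" and ne: "E \<noteq> {}" and mdef: "m = Max E"
begin

lemma m_in: "m \<in> E" using fin ne mdef by auto

lemma LL1:
  assumes t: "\<tau> \<subseteq> E - {m}"
  shows "LL E \<tau> = LL (E-{m}) \<tau> \<union> insert m ` LL (E-{m}) \<tau>"
proof -
  have tm: "\<tau> - {m} = \<tau>" and mt: "m \<notin> \<tau>" and tE: "\<tau> \<subseteq> E" using t by auto
  have sp: "setless \<sigma> \<tau> \<longleftrightarrow> setless (\<sigma>-{m}) \<tau>" if "\<sigma> \<subseteq> E" for \<sigma>
    using setless_split[OF fin mdef that tE] unfolding tm using mt by simp
  have key: "\<sigma> \<in> LL E \<tau> \<longleftrightarrow> \<sigma> \<subseteq> E \<and> \<sigma>-{m} \<in> LL (E-{m}) \<tau>" for \<sigma>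
    unfolding LL_def mem_Collect_eq using sp by blast
  show ?thesis
  proof (intro set_eqI iffI)
    fix \<sigma> assume h: "\<sigma> \<in> LL E \<tau>"
    show "\<sigma> \<in> LL (E-{m}) \<tau> \<union> insert m ` LL (E-{m}) \<tau>"
    proof (cases "m \<in> \<sigma>")
      case True
      then have "\<sigma> = insert m (\<sigma>-{m})" by auto
      then show ?thesis using h key by blast
    next
      case False
      then show ?thesis using h key by simp
    qed
  next
    fix \<sigma> assume "\<sigma> \<in> LL (E-{m}) \<tau> \<union> insert m ` LL (E-{m}) \<tau>"
    then show "\<sigma> \<in> LL E \<tau>"
    proof
      assume h: "\<sigma> \<in> LL (E-{m}) \<tau>"
      then have "m \<notin> \<sigma>" "\<sigma> \<subseteq> E" unfolding LL_def by auto
      then show ?thesis using h key by simp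
    next
      assume "\<sigma> \<in> insert m ` LL (E-{m}) \<tau>"
      then obtain \<rho> where r: "\<rho> \<in> LL (E-{m}) \<tau>" "\<sigma> = insert m \<rho>" by blast
      then have "m \<notin> \<rho>" "\<rho> \<subseteq> E" unfolding LL_def by auto
      then have "\<sigma> - {m} = \<rho>" "\<sigma> \<subseteq> E" using r m_in by auto
      then show ?thesis using r key by simp
    qed
  qed
qed

lemma LL2:
  assumes t: "\<rho> \<subseteq> E - {m}"
  shows "LL E (insert m \<rho>) = LL (E-{m}) \<rho> \<union> insert m ` LL (E-{m}) \<rho> \<union> {\<rho>}"
proof -
  have mr: "m \<notin> \<rho>" and tE: "insert m \<rho> \<subseteq> E" and tm: "insert m \<rho> - {m} = \<rho>"
    using t m_in by auto
  have sp: "setless \<sigma> (insert m \<rho>) \<longleftrightarrow> setless (\<sigma>-{m}) \<rho> \<or> (\<sigma>-{m} = \<rho> \<and> m \<notin> \<sigma>)" if "\<sigma> \<subseteq> E" for \<sigma>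
    using setless_split[OF fin mdef that tE] unfolding tm by simp
  have key: "\<sigma> \<in> LL E (insert m \<rho>) \<longleftrightarrow> \<sigma> \<subseteq> E \<and> (\<sigma>-{m} \<in> LL (E-{m}) \<rho> \<or> (\<sigma>-{m} = \<rho> \<and> m \<notin> \<sigma>))" for \<sigma>
    unfolding LL_def mem_Collect_eq using sp by blast
  show ?thesis
  proof (intro set_eqI iffI)
    fix \<sigma> assume h: "\<sigma> \<in> LL E (insert m \<rho>)"
    show "\<sigma> \<in> LL (E-{m}) \<rho> \<union> insert m ` LL (E-{m}) \<rho> \<union> {\<rho>}"
    proof (cases "m \<in> \<sigma>")
      case True
      then have e: "\<sigma> = insert m (\<sigma>-{m})" by auto
      from h have "\<sigma>-{m} \<in> LL (E-{m}) \<rho>" unfolding key using True by simp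
      then have "insert m (\<sigma>-{m}) \<in> insert m ` LL (E-{m}) \<rho>" by (rule imageI)
      then show ?thesis using e by simp
    next
      case False
      then have "\<sigma>-{m} = \<sigma>" by simp
      then show ?thesis using h False unfolding key by auto
    qed
  next
    fix \<sigma> assume "\<sigma> \<in> LL (E-{m}) \<rho> \<union> insert m ` LL (E-{m}) \<rho> \<union> {\<rho>}"
    then consider "\<sigma> \<in> LL (E-{m}) \<rho>" | "\<sigma> \<in> insert m ` LL (E-{m}) \<rho>" | "\<sigma> = \<rho>" by blast
    then show "\<sigma> \<in> LL E (insert m \<rho>)"
    proof cases
      case 1
      then have "m \<notin> \<sigma>" "\<sigma> \<subseteq> E" unfolding LL_def by auto
      then show ?thesis using 1 key by simp
    next
      case 2
      then obtain \<rho>' where r: "\<rho>' \<in> LL (E-{m}) \<rho>" "\<sigma> = insert m \<rho>'" by blast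
      then have "m \<notin> \<rho>'" "\<rho>' \<subseteq> E" unfolding LL_def by auto
      then have "\<sigma> - {m} = \<rho>'" "\<sigma> \<subseteq> E" using r m_in by auto
      then show ?thesis using r key by simp
    next
      case 3
      have "\<rho> \<subseteq> E" "\<rho> - {m} = \<rho>" using t by auto
      then show ?thesis unfolding key using 3 mr by simp
    qed
  qed
qed

lemma notm_LL: "\<sigma> \<in> LL (E-{m}) \<tau> \<Longrightarrow> m \<notin> \<sigma>"
  unfolding LL_def by auto

lemma sum1:
  assumes t: "\<tau> \<subseteq> E - {m}"
  shows "(\<Sum>\<sigma>\<in>LL E \<tau>. g \<sigma>) = (\<Sum>\<rho>\<in>LL (E-{m}) \<tau>. g \<rho>) + (\<Sum>\<rho>\<in>LL (E-{m}) \<tau>. g (insert m \<rho>))"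
proof -
  have f: "finite (LL (E-{m}) \<tau>)" using fin finite_LL by auto
  have inj: "inj_on (insert m) (LL (E-{m}) \<tau>)"
    by (rule inj_onI) (metis Diff_insert_absorb notm_LL)
  have d: "LL (E-{m}) \<tau> \<inter> insert m ` LL (E-{m}) \<tau> = {}" using notm_LL by auto
  show ?thesis unfolding LL1[OF t]
    by (subst sum.union_disjoint) (use f d in auto, simp add: sum.reindex[OF inj])
qed

lemma sum2:
  assumes t: "\<rho> \<subseteq> E - {m}"
  shows "(\<Sum>\<sigma>\<in>LL E (insert m \<rho>). g \<sigma>) = (\<Sum>\<rho>'\<in>LL (E-{m}) \<rho>. g \<rho>') + (\<Sum>\<rho>'\<in>LL (E-{m}) \<rho>. g (insert m \<rho>')) + g \<rho>"
proof -
  have f: "finite (LL (E-{m}) \<rho>)" using fin finite_LL by auto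
  have inj: "inj_on (insert m) (LL (E-{m}) \<rho>)"
    by (rule inj_onI) (metis Diff_insert_absorb notm_LL)
  have d: "LL (E-{m}) \<rho> \<inter> insert m ` LL (E-{m}) \<rho> = {}" using notm_LL by auto
  have r1: "\<rho> \<notin> LL (E-{m}) \<rho>" unfolding LL_def using setless_irrefl by auto
  have r2: "\<rho> \<notin> insert m ` LL (E-{m}) \<rho>" using t by auto
  show ?thesis unfolding LL2[OF t]
    apply (subst sum.union_disjoint) using f r1 r2 apply auto[3]
    apply (subst sum.union_disjoint) using f d apply auto[3]
    by (simp add: sum.reindex[OF inj])
qed

lemma chi_ins_notin: "m \<notin> B \<Longrightarrow> chi (insert m \<rho>) B = 0"
  unfolding chi_def by auto
lemma chi_ins_in: "m \<in> B \<Longrightarrow> m \<notin> \<rho> \<Longrightarrow> chi (insert m \<rho>) B = chi \<rho> (B - {m})"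
  unfolding chi_def by auto
lemma chi_in: "m \<in> B \<Longrightarrow> m \<notin> \<rho> \<Longrightarrow> chi \<rho> B = chi \<rho> (B - {m})"
  unfolding chi_def by auto

end


context split_setup begin

definition V0 :: "nat set set \<Rightarrow> nat set set" where
  "V0 \<B> = {B\<in>\<B>. m \<notin> B}"
definition V1 :: "nat set set \<Rightarrow> nat set set" where
  "V1 \<B> = (\<lambda>B. B - {m}) ` {B\<in>\<B>. m \<in> B}"

lemma R1:
  assumes t: "\<tau> \<subseteq> E - {m}"
  shows "dep \<B> E \<tau> \<longleftrightarrow> dep (V0 \<B>) (E-{m}) \<tau> \<and> dep (V1 \<B>) (E-{m}) \<tau>"
proof -
  let ?L = "LL (E-{m}) \<tau>"
  have mt: "m \<notin> \<tau>" using t by auto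
  show ?thesis
  proof
    assume "dep \<B> E \<tau>"
    then obtain c where c: "\<And>B. B \<in> \<B> \<Longrightarrow> chi \<tau> B = (\<Sum>\<sigma>\<in>LL E \<tau>. c \<sigma> * chi \<sigma> B)"
      unfolding dep_def by blast
    have "dep (V0 \<B>) (E-{m}) \<tau>" unfolding dep_def
    proof (intro exI[of _ c] ballI)
      fix B assume "B \<in> V0 \<B>"
      then have B: "B \<in> \<B>" "m \<notin> B" unfolding V0_def by auto
      have "chi \<tau> B = (\<Sum>\<rho>\<in>?L. c \<rho> * chi \<rho> B) + (\<Sum>\<rho>\<in>?L. c (insert m \<rho>) * chi (insert m \<rho>) B)"
        using c[OF B(1)] sum1[OF t] by simp
      also have "(\<Sum>\<rho>\<in>?L. c (insert m \<rho>) * chi (insert m \<rho>) B) = 0"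
        using chi_ins_notin[OF B(2)] by simp
      finally show "chi \<tau> B = (\<Sum>\<rho>\<in>?L. c \<rho> * chi \<rho> B)" by simp
    qed
    moreover have "dep (V1 \<B>) (E-{m}) \<tau>" unfolding dep_def
    proof (intro exI[of _ "\<lambda>\<rho>. c \<rho> + c (insert m \<rho>)"] ballI)
      fix B' assume "B' \<in> V1 \<B>"
      then obtain B where B: "B \<in> \<B>" "m \<in> B" "B' = B - {m}" unfolding V1_def by auto
      have "chi \<tau> B' = chi \<tau> B" using chi_in[OF B(2) mt] B by simp
      also have "\<dots> = (\<Sum>\<rho>\<in>?L. c \<rho> * chi \<rho> B) + (\<Sum>\<rho>\<in>?L. c (insert m \<rho>) * chi (insert m \<rho>) B)"
        using c[OF B(1)] sum1[OF t] by simp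
      also have "\<dots> = (\<Sum>\<rho>\<in>?L. c \<rho> * chi \<rho> B') + (\<Sum>\<rho>\<in>?L. c (insert m \<rho>) * chi \<rho> B')"
        using chi_in[OF B(2)] chi_ins_in[OF B(2)] notm_LL B(3) by (intro arg_cong2[where f="(+)"] sum.cong) auto
      also have "\<dots> = (\<Sum>\<rho>\<in>?L. (c \<rho> + c (insert m \<rho>)) * chi \<rho> B')"
        by (simp add: sum.distrib distrib_right)
      finally show "chi \<tau> B' = (\<Sum>\<rho>\<in>?L. (c \<rho> + c (insert m \<rho>)) * chi \<rho> B')" .
    qed
    ultimately show "dep (V0 \<B>) (E-{m}) \<tau> \<and> dep (V1 \<B>) (E-{m}) \<tau>" by blast
  next
    assume "dep (V0 \<B>) (E-{m}) \<tau> \<and> dep (V1 \<B>) (E-{m}) \<tau>"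
    then obtain c0 c1 where
      c0: "\<And>B. B \<in> V0 \<B> \<Longrightarrow> chi \<tau> B = (\<Sum>\<rho>\<in>?L. c0 \<rho> * chi \<rho> B)" and
      c1: "\<And>B. B \<in> V1 \<B> \<Longrightarrow> chi \<tau> B = (\<Sum>\<rho>\<in>?L. c1 \<rho> * chi \<rho> B)"
      unfolding dep_def by blast
    define c where "c \<sigma> = (if m \<in> \<sigma> then c1 (\<sigma>-{m}) - c0 (\<sigma>-{m}) else c0 \<sigma>)" for \<sigma>
    show "dep \<B> E \<tau>" unfolding dep_def
    proof (intro exI[of _ c] ballI)
      fix B assume B: "B \<in> \<B>"
      have "(\<Sum>\<sigma>\<in>LL E \<tau>. c \<sigma> * chi \<sigma> B) =
          (\<Sum>\<rho>\<in>?L. c \<rho> * chi \<rho> B) + (\<Sum>\<rho>\<in>?L. c (insert m \<rho>) * chi (insert m \<rho>) B)"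
        by (rule sum1[OF t])
      also have "\<dots> = (\<Sum>\<rho>\<in>?L. c0 \<rho> * chi \<rho> B) + (\<Sum>\<rho>\<in>?L. (c1 \<rho> - c0 \<rho>) * chi (insert m \<rho>) B)"
        using notm_LL by (intro arg_cong2[where f="(+)"] sum.cong) (auto simp: c_def)
      also have "\<dots> = chi \<tau> B"
      proof (cases "m \<in> B")
        case False
        then have "B \<in> V0 \<B>" using B unfolding V0_def by auto
        then show ?thesis using c0 chi_ins_notin[OF False] by simp
      next
        case True
        have V: "B - {m} \<in> V1 \<B>" using B True unfolding V1_def by auto
        have "(\<Sum>\<rho>\<in>?L. c0 \<rho> * chi \<rho> B) + (\<Sum>\<rho>\<in>?L. (c1 \<rho> - c0 \<rho>) * chi (insert m \<rho>) B)
           = (\<Sum>\<rho>\<in>?L. c0 \<rho> * chi \<rho> (B-{m})) + (\<Sum>\<rho>\<in>?L. (c1 \<rho> - c0 \<rho>) * chi \<rho> (B-{m}))"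
          using chi_in[OF True] chi_ins_in[OF True] notm_LL by (intro arg_cong2[where f="(+)"] sum.cong) auto
        also have "\<dots> = (\<Sum>\<rho>\<in>?L. c1 \<rho> * chi \<rho> (B-{m}))"
          by (simp add: sum.distrib[symmetric] algebra_simps)
        also have "\<dots> = chi \<tau> (B - {m})" using c1[OF V] by simp
        also have "\<dots> = chi \<tau> B" using chi_in[OF True mt] by simp
        finally show ?thesis .
      qed
      finally show "chi \<tau> B = (\<Sum>\<sigma>\<in>LL E \<tau>. c \<sigma> * chi \<sigma> B)" by simp
    qed
  qed
qed

lemma R2:
  assumes t: "\<rho> \<subseteq> E - {m}"
  shows "dep \<B> E (insert m \<rho>) \<longleftrightarrow> dep (V0 \<B>) (E-{m}) \<rho> \<or> dep (V1 \<B>) (E-{m}) \<rho>"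
proof -
  let ?L = "LL (E-{m}) \<rho>"
  have mr: "m \<notin> \<rho>" using t by auto
  have nr: "\<rho>' \<noteq> \<rho>" if "\<rho>' \<in> ?L" for \<rho>'
    using that setless_irrefl unfolding LL_def by auto
  show ?thesis
  proof
    assume "dep \<B> E (insert m \<rho>)"
    then obtain c where c: "\<And>B. B \<in> \<B> \<Longrightarrow> chi (insert m \<rho>) B =
        (\<Sum>\<rho>'\<in>?L. c \<rho>' * chi \<rho>' B) + (\<Sum>\<rho>'\<in>?L. c (insert m \<rho>') * chi (insert m \<rho>') B) + c \<rho> * chi \<rho> B"
      unfolding dep_def sum2[OF t] by blast
    show "dep (V0 \<B>) (E-{m}) \<rho> \<or> dep (V1 \<B>) (E-{m}) \<rho>"
    proof (cases "c \<rho> = 0")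
      case False
      have "dep (V0 \<B>) (E-{m}) \<rho>" unfolding dep_def
      proof (intro exI[of _ "\<lambda>\<rho>'. - c \<rho>' / c \<rho>"] ballI)
        fix B assume "B \<in> V0 \<B>"
        then have B: "B \<in> \<B>" "m \<notin> B" unfolding V0_def by auto
        have "0 = (\<Sum>\<rho>'\<in>?L. c \<rho>' * chi \<rho>' B) + c \<rho> * chi \<rho> B"
          using c[OF B(1)] chi_ins_notin[OF B(2)] by simp
        then have "chi \<rho> B = - (\<Sum>\<rho>'\<in>?L. c \<rho>' * chi \<rho>' B) / c \<rho>"
          using False by (simp add: field_simps)
        also have "\<dots> = (\<Sum>\<rho>'\<in>?L. (- c \<rho>' / c \<rho>) * chi \<rho>' B)"
          by (simp add: sum_divide_distrib sum_negf[symmetric])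
        finally show "chi \<rho> B = (\<Sum>\<rho>'\<in>?L. (- c \<rho>' / c \<rho>) * chi \<rho>' B)" .
      qed
      then show ?thesis by blast
    next
      case True
      have "dep (V1 \<B>) (E-{m}) \<rho>" unfolding dep_def
      proof (intro exI[of _ "\<lambda>\<rho>'. c \<rho>' + c (insert m \<rho>')"] ballI)
        fix B' assume "B' \<in> V1 \<B>"
        then obtain B where B: "B \<in> \<B>" "m \<in> B" "B' = B - {m}" unfolding V1_def by auto
        have "chi \<rho> B' = chi (insert m \<rho>) B" using chi_ins_in[OF B(2) mr] B by simp
        also have "\<dots> = (\<Sum>\<rho>'\<in>?L. c \<rho>' * chi \<rho>' B) + (\<Sum>\<rho>'\<in>?L. c (insert m \<rho>') * chi (insert m \<rho>') B)"
          using c[OF B(1)] True by simp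
        also have "\<dots> = (\<Sum>\<rho>'\<in>?L. c \<rho>' * chi \<rho>' B') + (\<Sum>\<rho>'\<in>?L. c (insert m \<rho>') * chi \<rho>' B')"
          using chi_in[OF B(2)] chi_ins_in[OF B(2)] notm_LL B(3) by (intro arg_cong2[where f="(+)"] sum.cong) auto
        also have "\<dots> = (\<Sum>\<rho>'\<in>?L. (c \<rho>' + c (insert m \<rho>')) * chi \<rho>' B')"
          by (simp add: sum.distrib distrib_right)
        finally show "chi \<rho> B' = (\<Sum>\<rho>'\<in>?L. (c \<rho>' + c (insert m \<rho>')) * chi \<rho>' B')" .
      qed
      then show ?thesis by blast
    qed
  next
    assume "dep (V0 \<B>) (E-{m}) \<rho> \<or> dep (V1 \<B>) (E-{m}) \<rho>"
    then show "dep \<B> E (insert m \<rho>)"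
    proof
      assume "dep (V0 \<B>) (E-{m}) \<rho>"
      then obtain c0 where c0: "\<And>B. B \<in> V0 \<B> \<Longrightarrow> chi \<rho> B = (\<Sum>\<rho>'\<in>?L. c0 \<rho>' * chi \<rho>' B)"
        unfolding dep_def by blast
      define c where "c \<sigma> = (if \<sigma> = \<rho> then 1 else if m \<in> \<sigma> then c0 (\<sigma>-{m}) else - c0 \<sigma>)" for \<sigma>
      show ?thesis unfolding dep_def
      proof (intro exI[of _ c] ballI)
        fix B assume B: "B \<in> \<B>"
        have "(\<Sum>\<sigma>\<in>LL E (insert m \<rho>). c \<sigma> * chi \<sigma> B) =
          (\<Sum>\<rho>'\<in>?L. c \<rho>' * chi \<rho>' B) + (\<Sum>\<rho>'\<in>?L. c (insert m \<rho>') * chi (insert m \<rho>') B) + c \<rho> * chi \<rho> B"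
          by (rule sum2[OF t])
        also have "\<dots> = (\<Sum>\<rho>'\<in>?L. - c0 \<rho>' * chi \<rho>' B) + (\<Sum>\<rho>'\<in>?L. c0 \<rho>' * chi (insert m \<rho>') B) + chi \<rho> B"
          using notm_LL nr mr by (intro arg_cong2[where f="(+)"] sum.cong) (auto simp: c_def)
        also have "\<dots> = chi (insert m \<rho>) B"
        proof (cases "m \<in> B")
          case False
          then have "B \<in> V0 \<B>" using B unfolding V0_def by auto
          then show ?thesis using c0 chi_ins_notin[OF False] by (simp add: sum_negf)
        next
          case True
          have "(\<Sum>\<rho>'\<in>?L. - c0 \<rho>' * chi \<rho>' B) + (\<Sum>\<rho>'\<in>?L. c0 \<rho>' * chi (insert m \<rho>') B) + chi \<rho> B
             = (\<Sum>\<rho>'\<in>?L. - c0 \<rho>' * chi \<rho>' (B-{m})) + (\<Sum>\<rho>'\<in>?L. c0 \<rho>' * chi \<rho>' (B-{m})) + chi \<rho> (B-{m})"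
            using chi_in[OF True] chi_ins_in[OF True] notm_LL mr
            by (intro arg_cong2[where f="(+)"] sum.cong) auto
          also have "\<dots> = chi \<rho> (B-{m})"
            by (simp add: sum_negf)
          also have "\<dots> = chi (insert m \<rho>) B" using chi_ins_in[OF True mr] by simp
          finally show ?thesis .
        qed
        finally show "chi (insert m \<rho>) B = (\<Sum>\<sigma>\<in>LL E (insert m \<rho>). c \<sigma> * chi \<sigma> B)" by simp
      qed
    next
      assume "dep (V1 \<B>) (E-{m}) \<rho>"
      then obtain c1 where c1: "\<And>B. B \<in> V1 \<B> \<Longrightarrow> chi \<rho> B = (\<Sum>\<rho>'\<in>?L. c1 \<rho>' * chi \<rho>' B)"
        unfolding dep_def by blast
      define c where "c \<sigma> = (if m \<in> \<sigma> then c1 (\<sigma>-{m}) else 0)" for \<sigma>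
      show ?thesis unfolding dep_def
      proof (intro exI[of _ c] ballI)
        fix B assume B: "B \<in> \<B>"
        have "(\<Sum>\<sigma>\<in>LL E (insert m \<rho>). c \<sigma> * chi \<sigma> B) =
          (\<Sum>\<rho>'\<in>?L. c \<rho>' * chi \<rho>' B) + (\<Sum>\<rho>'\<in>?L. c (insert m \<rho>') * chi (insert m \<rho>') B) + c \<rho> * chi \<rho> B"
          by (rule sum2[OF t])
        also have "\<dots> = (\<Sum>\<rho>'\<in>?L. c1 \<rho>' * chi (insert m \<rho>') B)"
          using notm_LL mr by (simp add: c_def)
        also have "\<dots> = chi (insert m \<rho>) B"
        proof (cases "m \<in> B")
          case False
          then show ?thesis using chi_ins_notin[OF False] by simp
        next
          case True
          have V: "B - {m} \<in> V1 \<B>" using B True unfolding V1_def by auto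
          have "(\<Sum>\<rho>'\<in>?L. c1 \<rho>' * chi (insert m \<rho>') B) = (\<Sum>\<rho>'\<in>?L. c1 \<rho>' * chi \<rho>' (B-{m}))"
            using chi_ins_in[OF True] notm_LL by (intro sum.cong) auto
          also have "\<dots> = chi \<rho> (B-{m})" using c1[OF V] by simp
          also have "\<dots> = chi (insert m \<rho>) B" using chi_ins_in[OF True mr] by simp
          finally show ?thesis .
        qed
        finally show "chi (insert m \<rho>) B = (\<Sum>\<sigma>\<in>LL E (insert m \<rho>). c \<sigma> * chi \<sigma> B)" by simp
      qed
    qed
  qed
qed

end


abbreviation lk where "lk \<equiv> Poly_Mapping.lookup"
abbreviation ks where "ks \<equiv> Poly_Mapping.keys"

definition ind :: "nat set \<Rightarrow> (nat \<Rightarrow>\<^sub>0 nat)" where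
  "ind \<sigma> = (\<Sum>i\<in>\<sigma>. Poly_Mapping.single i 1)"

lemma lookup_ind: "finite \<sigma> \<Longrightarrow> lk (ind \<sigma>) i = (if i \<in> \<sigma> then 1 else 0)"
  unfolding ind_def lookup_sum lookup_single by (simp add: when_def)

lemma keys_ind: "finite \<sigma> \<Longrightarrow> ks (ind \<sigma>) = \<sigma>"
  by (auto simp: in_keys_iff lookup_ind split: if_splits)

lemma set_monom_ind: "set_monom \<tau> = monom (ind \<tau>)"
  unfolding set_monom_def ind_def ..

lemma ind_less:
  assumes "finite \<sigma>" "finite \<tau>" "setless \<sigma> \<tau>"
  shows "ind \<sigma> < ind \<tau>"
proof -
  obtain k where k: "k \<in> \<tau>" "k \<notin> \<sigma>" "\<forall>j<k. j \<in> \<sigma> \<longleftrightarrow> j \<in> \<tau>"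
    using assms(3) unfolding setless_def by blast
  show ?thesis unfolding less_poly_mapping.rep_eq less_fun_def
    using k by (intro exI[of _ k]) (simp add: lookup_ind assms)
qed

lemma less_ind_setless:
  assumes "finite A" "\<alpha> < ind A"
  shows "setless (ks \<alpha>) A"
proof -
  obtain k where k: "lk \<alpha> k < lk (ind A) k" "\<forall>k'<k. lk \<alpha> k' = lk (ind A) k'"
    using assms(2) unfolding less_poly_mapping.rep_eq less_fun_def by blast
  have "k \<in> A" "lk \<alpha> k = 0" using k(1) by (auto simp: lookup_ind assms(1) split: if_splits)
  moreover have "j \<in> ks \<alpha> \<longleftrightarrow> j \<in> A" if "j < k" for j
    using k(2) that by (auto simp: in_keys_iff lookup_ind assms(1))
  ultimately show ?thesis unfolding setless_def
    by (intro exI[of _ k]) (auto simp: in_keys_iff)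
qed

lemma setless_union:
  assumes "setless S A" "C \<inter> A = {}"
  shows "setless (S \<union> C) (A \<union> C)"
  using assms unfolding setless_def by (metis (no_types, lifting) Int_iff Un_iff empty_iff)

definition mon :: "(nat \<Rightarrow>\<^sub>0 nat) \<Rightarrow> (nat \<Rightarrow> real) \<Rightarrow> real" where
  "mon \<alpha> v = (\<Prod>i\<in>ks \<alpha>. v i ^ lk \<alpha> i)"

lemma mon_char: "mon \<alpha> (char_vec B) = chi (ks \<alpha>) B"
proof (cases "ks \<alpha> \<subseteq> B")
  case True
  then show ?thesis unfolding mon_def chi_def char_vec_def
    by (intro trans[OF prod.neutral]) auto
next
  case False
  then obtain i where i: "i \<in> ks \<alpha>" "i \<notin> B" by blast
  then have "lk \<alpha> i \<noteq> 0" by (simp add: in_keys_iff)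
  then have "(\<Prod>i\<in>ks \<alpha>. char_vec B i ^ lk \<alpha> i) = 0"
    using i by (subst prod_zero_iff) (auto simp: char_vec_def intro!: bexI[of _ i])
  then show ?thesis using False unfolding mon_def chi_def by simp
qed

lemma eval_poly_eq:
  assumes "finite S" "ks p \<subseteq> S"
  shows "eval_poly p v = (\<Sum>\<alpha>\<in>S. lk p \<alpha> * mon \<alpha> v)"
  unfolding eval_poly_def mon_def
  by (rule sum.mono_neutral_left) (use assms in \<open>auto simp: in_keys_iff\<close>)

lemma eval_add: "eval_poly (p + q) v = eval_poly p v + eval_poly q v"
proof -
  let ?S = "ks p \<union> ks q"
  have "eval_poly (p + q) v = (\<Sum>\<alpha>\<in>?S. lk (p+q) \<alpha> * mon \<alpha> v)"
    using keys_add[of p q] by (intro eval_poly_eq) auto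
  also have "\<dots> = (\<Sum>\<alpha>\<in>?S. lk p \<alpha> * mon \<alpha> v) + (\<Sum>\<alpha>\<in>?S. lk q \<alpha> * mon \<alpha> v)"
    by (simp add: lookup_add sum.distrib distrib_right)
  also have "\<dots> = eval_poly p v + eval_poly q v"
    by (subst (1 2) eval_poly_eq[of ?S]) auto
  finally show ?thesis .
qed

lemma eval_diff: "eval_poly (p - q) v = eval_poly p v - eval_poly q v"
proof -
  let ?S = "ks p \<union> ks q"
  have "eval_poly (p - q) v = (\<Sum>\<alpha>\<in>?S. lk (p-q) \<alpha> * mon \<alpha> v)"
    using keys_diff[of p q] by (intro eval_poly_eq) auto
  also have "\<dots> = (\<Sum>\<alpha>\<in>?S. lk p \<alpha> * mon \<alpha> v) - (\<Sum>\<alpha>\<in>?S. lk q \<alpha> * mon \<alpha> v)"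
    by (simp add: lookup_minus sum_subtractf left_diff_distrib)
  also have "\<dots> = eval_poly p v - eval_poly q v"
    by (subst (1 2) eval_poly_eq[of ?S]) auto
  finally show ?thesis .
qed

lemma eval_zero: "eval_poly 0 v = 0"
  unfolding eval_poly_def by simp

lemma eval_sum: "finite I \<Longrightarrow> eval_poly (\<Sum>i\<in>I. p i) v = (\<Sum>i\<in>I. eval_poly (p i) v)"
  by (induction I rule: finite_induct) (auto simp: eval_zero eval_add)

lemma eval_single: "eval_poly (Poly_Mapping.single \<alpha> c) v = c * mon \<alpha> v"
  by (subst eval_poly_eq[of "{\<alpha>}"]) (auto simp: lookup_single)



lemma C1:
  assumes fin: "finite E" and t: "\<tau> \<subseteq> E" and d: "dep \<B> E \<tau>"
  shows "set_monom \<tau> \<in> initial_ideal E (vanishing_ideal E \<B>)"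
proof -
  obtain c where c: "\<And>B. B \<in> \<B> \<Longrightarrow> chi \<tau> B = (\<Sum>\<sigma>\<in>LL E \<tau>. c \<sigma> * chi \<sigma> B)"
    using d unfolding dep_def by blast
  let ?L = "LL E \<tau>"
  have finL: "finite ?L" using finite_LL[OF fin] .
  have ft: "finite \<tau>" using fin t finite_subset by blast
  have fs: "finite \<sigma>" if "\<sigma> \<in> ?L" for \<sigma> using that fin finite_subset unfolding LL_def by blast
  have lt: "ind \<sigma> < ind \<tau>" if "\<sigma> \<in> ?L" for \<sigma>
    using ind_less[OF fs[OF that] ft] that unfolding LL_def by blast
  define f :: mpoly where "f = Poly_Mapping.single (ind \<tau>) 1 - (\<Sum>\<sigma>\<in>?L. Poly_Mapping.single (ind \<sigma>) (c \<sigma>))"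
  have kf: "ks f \<subseteq> insert (ind \<tau>) (ind ` ?L)"
  proof -
    have "ks f \<subseteq> ks (Poly_Mapping.single (ind \<tau>) (1::real)) \<union> ks (\<Sum>\<sigma>\<in>?L. Poly_Mapping.single (ind \<sigma>) (c \<sigma>))"
      unfolding f_def by (rule keys_diff)
    also have "\<dots> \<subseteq> {ind \<tau>} \<union> (\<Union>\<sigma>\<in>?L. ks (Poly_Mapping.single (ind \<sigma>) (c \<sigma>)))"
      using keys_sum[of "\<lambda>\<sigma>. Poly_Mapping.single (ind \<sigma>) (c \<sigma>)" ?L] by auto
    also have "\<dots> \<subseteq> insert (ind \<tau>) (ind ` ?L)" by auto
    finally show ?thesis .
  qed
  have pr: "f \<in> poly_ring E"
    unfolding poly_ring_def
  proof (intro CollectI ballI)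
    fix \<alpha> assume "\<alpha> \<in> ks f"
    then have "\<alpha> = ind \<tau> \<or> (\<exists>\<sigma>\<in>?L. \<alpha> = ind \<sigma>)" using kf by auto
    then show "ks \<alpha> \<subseteq> E"
    proof
      assume "\<alpha> = ind \<tau>" then show ?thesis using keys_ind[OF ft] t by simp
    next
      assume "\<exists>\<sigma>\<in>?L. \<alpha> = ind \<sigma>"
      then obtain \<sigma> where "\<sigma> \<in> ?L" "\<alpha> = ind \<sigma>" by blast
      then show ?thesis using keys_ind[OF fs] unfolding LL_def by auto
    qed
  qed
  have ev: "eval_poly f (char_vec B) = 0" if B: "B \<in> \<B>" for B
  proof -
    have "eval_poly f (char_vec B) = chi \<tau> B - (\<Sum>\<sigma>\<in>?L. c \<sigma> * chi \<sigma> B)"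
      unfolding f_def eval_diff eval_sum[OF finL] eval_single mon_char
      using keys_ind[OF ft] keys_ind[OF fs] by simp
    then show ?thesis using c[OF B] by simp
  qed
  have lk1: "lk f (ind \<tau>) = 1"
  proof -
    have "lk (Poly_Mapping.single (ind \<sigma>) (c \<sigma>)) (ind \<tau>) = 0" if "\<sigma> \<in> ?L" for \<sigma>
      using lt[OF that] by (auto simp: lookup_single when_def)
    then show ?thesis unfolding f_def lookup_minus lookup_sum by (simp add: lookup_single)
  qed
  then have inf: "ind \<tau> \<in> ks f" by (simp add: in_keys_iff)
  then have fnz: "f \<noteq> 0" by auto
  have le: "lead_exp f = ind \<tau>" unfolding lead_exp_def
  proof (rule Max_eqI)
    fix \<alpha> assume "\<alpha> \<in> ks f"
    then show "\<alpha> \<le> ind \<tau>" using kf lt by fastforce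
  qed (use inf in auto)
  have one: "(1::mpoly) \<in> poly_ring E" unfolding poly_ring_def by simp
  have "set_monom \<tau> = (\<Sum>j<(1::nat). (\<lambda>_. 1::mpoly) j * monom (lead_exp ((\<lambda>_. f) j)))"
    by (simp add: le set_monom_ind)
  moreover have "\<forall>j<(1::nat). (\<lambda>_. 1::mpoly) j \<in> poly_ring E \<and> (\<lambda>_. f) j \<in> vanishing_ideal E \<B> \<and> (\<lambda>_. f) j \<noteq> 0"
    using one pr ev fnz unfolding vanishing_ideal_def by auto
  ultimately show ?thesis unfolding initial_ideal_def mem_Collect_eq
    apply -
    apply (rule exI[of _ "1::nat"], rule exI[of _ "\<lambda>_. 1::mpoly"], rule exI[of _ "\<lambda>_. f"])
    apply (rule conjI, assumption, assumption)
    done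
qed

lemma lookup_mult_single_zero:
  fixes q :: mpoly
  assumes "\<not> (\<exists>l. t = l + a)"
  shows "lk (q * Poly_Mapping.single a 1) t = 0"
proof -
  have z: "((1 when a = r) when t = l + r) = (0::real)" for l r
    using assms by (auto simp: when_def)
  show ?thesis unfolding lookup_mult lookup_single by (simp add: z)
qed

lemma solve_lin: "(x::real) \<noteq> 0 \<Longrightarrow> 0 = x * y + s \<Longrightarrow> y = - s / x"
  by (simp add: field_simps)

lemma C2step:
  assumes fin: "finite E" and t: "\<tau> \<subseteq> E" and pr: "f \<in> poly_ring E" and fnz: "f \<noteq> 0"
    and ev: "\<And>B. B \<in> \<B> \<Longrightarrow> eval_poly f (char_vec B) = 0"
    and ale: "\<And>i. lk (lead_exp f) i \<le> lk (ind \<tau>) i"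
  shows "dep \<B> E \<tau>"
proof -
  define K where "K = ks f"
  define a where "a = lead_exp f"
  have fK: "finite K" unfolding K_def by simp
  have neK: "K \<noteq> {}" using fnz unfolding K_def by simp
  have aK: "a \<in> K" unfolding a_def lead_exp_def K_def[symmetric] using fK neK by simp
  have aMax: "\<alpha> \<le> a" if "\<alpha> \<in> K" for \<alpha> unfolding a_def lead_exp_def K_def[symmetric]
    using fK that by simp
  have fa: "lk f a \<noteq> 0" using aK unfolding K_def by (simp add: in_keys_iff)
  have ft: "finite \<tau>" using fin t finite_subset by blast
  define A where "A = ks a"
  have At: "A \<subseteq> \<tau>"
  proof
    fix i assume "i \<in> A"
    then have "lk a i \<noteq> 0" unfolding A_def by (simp add: in_keys_iff)
    then have "lk (ind \<tau>) i \<noteq> 0" using ale[of i] unfolding a_def by simp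
    then show "i \<in> \<tau>" by (simp add: lookup_ind ft split: if_splits)
  qed
  have fA: "finite A" unfolding A_def by simp
  have aA: "a = ind A"
  proof (rule poly_mapping_eqI)
    fix i
    show "lk a i = lk (ind A) i"
    proof (cases "i \<in> A")
      case True
      then have "lk a i \<noteq> 0" unfolding A_def by (simp add: in_keys_iff)
      moreover have "lk a i \<le> 1" using ale[of i] unfolding a_def[symmetric]
        by (simp add: lookup_ind ft split: if_splits)
      ultimately show ?thesis using True by (simp add: lookup_ind fA)
    next
      case False
      then show ?thesis unfolding A_def by (simp add: in_keys_iff lookup_ind)
    qed
  qed
  define C where "C = \<tau> - A"
  define \<phi> where "\<phi> \<alpha> = ks \<alpha> \<union> C" for \<alpha> :: "nat \<Rightarrow>\<^sub>0 nat"
  have tAC: "\<tau> = A \<union> C" using At unfolding C_def by auto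
  have phia: "\<phi> a = \<tau>" unfolding \<phi>_def A_def[symmetric] using tAC by simp
  let ?K' = "K - {a}"
  let ?L = "LL E \<tau>"
  have phiL: "\<phi> \<alpha> \<in> ?L" if "\<alpha> \<in> ?K'" for \<alpha>
  proof -
    have "\<alpha> < a" using aMax[of \<alpha>] that by auto
    then have "setless (ks \<alpha>) A" using less_ind_setless[OF fA] aA by simp
    moreover have CA: "C \<inter> A = {}" unfolding C_def by auto
    ultimately have "setless (\<phi> \<alpha>) \<tau>" unfolding \<phi>_def
      using setless_union[of "ks \<alpha>" A C] tAC by simp
    moreover have "ks \<alpha> \<subseteq> E" using pr that unfolding poly_ring_def K_def by auto
    ultimately show ?thesis unfolding LL_def \<phi>_def C_def using t by auto
  qed
  define c where "c \<sigma> = - (\<Sum>\<alpha>\<in>{\<alpha>\<in>?K'. \<phi> \<alpha> = \<sigma>}. lk f \<alpha>) / lk f a" for \<sigma>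
  show ?thesis unfolding dep_def
  proof (intro exI[of _ c] ballI)
    fix B assume B: "B \<in> \<B>"
    have chiU: "chi (X \<union> C) B = chi X B * chi C B" for X unfolding chi_def by auto
    have "0 = eval_poly f (char_vec B)" using ev[OF B] by simp
    also have "\<dots> = (\<Sum>\<alpha>\<in>K. lk f \<alpha> * chi (ks \<alpha>) B)"
      unfolding eval_poly_def K_def[symmetric] using mon_char unfolding mon_def by simp
    finally have "0 = (\<Sum>\<alpha>\<in>K. lk f \<alpha> * chi (ks \<alpha>) B) * chi C B" by simp
    also have "\<dots> = (\<Sum>\<alpha>\<in>K. lk f \<alpha> * chi (\<phi> \<alpha>) B)"
      unfolding sum_distrib_right \<phi>_def chiU by (simp add: mult.assoc)
    also have "\<dots> = lk f a * chi \<tau> B + (\<Sum>\<alpha>\<in>?K'. lk f \<alpha> * chi (\<phi> \<alpha>) B)"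
      using sum.remove[OF fK aK, of "\<lambda>\<alpha>. lk f \<alpha> * chi (\<phi> \<alpha>) B"] phia by simp
    also have "(\<Sum>\<alpha>\<in>?K'. lk f \<alpha> * chi (\<phi> \<alpha>) B) =
        (\<Sum>\<sigma>\<in>?L. \<Sum>\<alpha>\<in>{\<alpha>\<in>?K'. \<phi> \<alpha> = \<sigma>}. lk f \<alpha> * chi (\<phi> \<alpha>) B)"
      using phiL by (intro sum.group[symmetric]) (auto simp: fK finite_LL[OF fin])
    also have "\<dots> = (\<Sum>\<sigma>\<in>?L. (\<Sum>\<alpha>\<in>{\<alpha>\<in>?K'. \<phi> \<alpha> = \<sigma>}. lk f \<alpha>) * chi \<sigma> B)"
      by (intro sum.cong refl) (simp add: sum_distrib_right)
    finally have eq: "chi \<tau> B = - (\<Sum>\<sigma>\<in>?L. (\<Sum>\<alpha>\<in>{\<alpha>\<in>?K'. \<phi> \<alpha> = \<sigma>}. lk f \<alpha>) * chi \<sigma> B) / lk f a"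
      by (rule solve_lin[OF fa])
    show "chi \<tau> B = (\<Sum>\<sigma>\<in>?L. c \<sigma> * chi \<sigma> B)"
      unfolding eq sum_negf[symmetric] sum_divide_distrib
      by (intro sum.cong refl) (simp add: c_def)
  qed
qed

lemma C2:
  assumes fin: "finite E" and t: "\<tau> \<subseteq> E"
    and mem: "set_monom \<tau> \<in> initial_ideal E (vanishing_ideal E \<B>)"
  shows "dep \<B> E \<tau>"
proof -
  obtain n q f where eq: "set_monom \<tau> = (\<Sum>j<(n::nat). q j * monom (lead_exp (f j)))"
    and h: "\<forall>j<n. q j \<in> poly_ring E \<and> f j \<in> vanishing_ideal E \<B> \<and> f j \<noteq> 0"
    using mem unfolding initial_ideal_def by blast
  have "\<exists>j<n. \<exists>l. ind \<tau> = l + lead_exp (f j)"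
  proof (rule ccontr)
    assume "\<not> ?thesis"
    then have "lk (q j * monom (lead_exp (f j))) (ind \<tau>) = 0" if "j < n" for j
      using that unfolding monom_def by (intro lookup_mult_single_zero) blast
    then have "lk (set_monom \<tau>) (ind \<tau>) = 0" unfolding eq lookup_sum by simp
    then show False unfolding set_monom_ind monom_def by (simp add: lookup_single)
  qed
  then obtain j l where j: "j < n" "ind \<tau> = l + lead_exp (f j)" by blast
  have ale: "lk (lead_exp (f j)) i \<le> lk (ind \<tau>) i" for i
    unfolding j(2) lookup_add by simp
  show ?thesis
    using h j(1) ale unfolding vanishing_ideal_def
    by (intro C2step[OF fin t, of "f j"]) auto
qed

lemma lsc_char:
  assumes "finite E"
  shows "lex_standard_complex E \<B> = {\<tau>. \<tau> \<subseteq> E \<and> \<not> dep \<B> E \<tau>}"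
  unfolding lex_standard_complex_def using C1[OF assms] C2[OF assms] by blast



lemma dep_empty: "dep {} E \<tau>"
  unfolding dep_def by simp

context split_setup begin

lemma rec:
  assumes t: "\<tau> \<subseteq> E"
  shows "\<not> dep \<B> E \<tau> \<longleftrightarrow> (if m \<in> \<tau> then \<not> dep (V0 \<B>) (E-{m}) (\<tau>-{m}) \<and> \<not> dep (V1 \<B>) (E-{m}) (\<tau>-{m})
           else \<not> dep (V0 \<B>) (E-{m}) \<tau> \<or> \<not> dep (V1 \<B>) (E-{m}) \<tau>)"
proof (cases "m \<in> \<tau>")
  case True
  then have e: "\<tau> = insert m (\<tau>-{m})" by auto
  have r: "\<tau>-{m} \<subseteq> E-{m}" using t by auto
  show ?thesis using R2[OF r, of \<B>] True e by (metis (no_types))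
next
  case False
  then have r: "\<tau> \<subseteq> E-{m}" using t by auto
  show ?thesis using R1[OF r, of \<B>] False by simp
qed

end

theorem theorem1p1:
  fixes E :: "nat set" and \<B> :: "nat set set" and m :: nat
  assumes "matroid_bases E \<B>" and "E \<noteq> {}" and "m = Max E"
  shows "(\<not> is_loop \<B> m \<and> \<not> is_coloop \<B> m \<longrightarrow>
            lex_standard_complex E \<B> =
              lex_standard_complex (E - {m}) (del_bases \<B> m)
              \<union> lex_standard_complex (E - {m}) (con_bases \<B> m)
              \<union> cone m (lex_standard_complex (E - {m}) (del_bases \<B> m)
                         \<inter> lex_standard_complex (E - {m}) (con_bases \<B> m)))
       \<and> (is_coloop \<B> m \<longrightarrow>
            lex_standard_complex E \<B> = lex_standard_complex (E - {m}) (del_bases \<B> m))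
       \<and> (is_loop \<B> m \<longrightarrow>
            lex_standard_complex E \<B> = lex_standard_complex (E - {m}) (con_bases \<B> m))"
proof -
  have fin: "finite E" using assms(1) unfolding matroid_bases_def by simp
  interpret split_setup E m using fin assms(2,3) by unfold_locales
  have fin': "finite (E - {m})" using fin by simp
  note L = lsc_char[OF fin] lsc_char[OF fin']
  have mE: "m \<in> E" by (rule m_in)
  have A: "\<tau> \<in> lex_standard_complex E \<B> \<longleftrightarrow> \<tau> \<subseteq> E \<and>
      (if m \<in> \<tau> then \<not> dep (V0 \<B>) (E-{m}) (\<tau>-{m}) \<and> \<not> dep (V1 \<B>) (E-{m}) (\<tau>-{m})
           else \<not> dep (V0 \<B>) (E-{m}) \<tau> \<or> \<not> dep (V1 \<B>) (E-{m}) \<tau>)" for \<tau>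
    unfolding L(1) mem_Collect_eq by (cases "\<tau> \<subseteq> E") (simp_all only: rec[of \<tau> \<B>] simp_thms)
  have part1: "lex_standard_complex E \<B> =
              lex_standard_complex (E - {m}) (del_bases \<B> m)
              \<union> lex_standard_complex (E - {m}) (con_bases \<B> m)
              \<union> cone m (lex_standard_complex (E - {m}) (del_bases \<B> m)
                         \<inter> lex_standard_complex (E - {m}) (con_bases \<B> m))"
    if nl: "\<not> is_loop \<B> m" and nc: "\<not> is_coloop \<B> m"
  proof -
    have d: "del_bases \<B> m = V0 \<B>" unfolding del_bases_def V0_def using nc by simp
    have c: "con_bases \<B> m = V1 \<B>" unfolding con_bases_def V1_def using nl by simp
    let ?S0 = "{\<tau>. \<tau> \<subseteq> E - {m} \<and> \<not> dep (V0 \<B>) (E - {m}) \<tau>}"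
    let ?S1 = "{\<tau>. \<tau> \<subseteq> E - {m} \<and> \<not> dep (V1 \<B>) (E - {m}) \<tau>}"
    show ?thesis unfolding d c L(2)
    proof (intro set_eqI iffI)
      fix \<tau> assume h: "\<tau> \<in> lex_standard_complex E \<B>"
      show "\<tau> \<in> ?S0 \<union> ?S1 \<union> cone m (?S0 \<inter> ?S1)"
      proof (cases "m \<in> \<tau>")
        case True
        then have "\<tau> - {m} \<in> ?S0 \<inter> ?S1" "\<tau> = insert m (\<tau> - {m})" using h unfolding A by auto
        then show ?thesis unfolding cone_def by blast
      next
        case False
        then show ?thesis using h unfolding A by auto
      qed
    next
      fix \<tau> assume h: "\<tau> \<in> ?S0 \<union> ?S1 \<union> cone m (?S0 \<inter> ?S1)"
      then consider "\<tau> \<in> ?S0 \<union> ?S1" | \<sigma> where "\<sigma> \<in> ?S0 \<inter> ?S1" "\<tau> = insert m \<sigma>"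
        unfolding cone_def by blast
      then show "\<tau> \<in> lex_standard_complex E \<B>"
      proof cases
        case 1
        then have "m \<notin> \<tau>" "\<tau> \<subseteq> E" by auto
        then show ?thesis unfolding A using 1 by auto
      next
        case 2
        then have "m \<in> \<tau>" "\<tau> \<subseteq> E" "\<tau> - {m} = \<sigma>" using mE by auto
        then show ?thesis unfolding A using 2 by auto
      qed
    qed
  qed
  have part2: "lex_standard_complex E \<B> = lex_standard_complex (E - {m}) (del_bases \<B> m)"
    if co: "is_coloop \<B> m"
  proof -
    have v0: "V0 \<B> = {}" using co unfolding V0_def is_coloop_def by auto
    have d: "del_bases \<B> m = V1 \<B>" unfolding del_bases_def V1_def using co
      unfolding is_coloop_def by auto
    show ?thesis unfolding d L(2)
    proof (intro set_eqI)
      fix \<tau>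
      show "\<tau> \<in> lex_standard_complex E \<B> \<longleftrightarrow> \<tau> \<in> {\<tau>. \<tau> \<subseteq> E - {m} \<and> \<not> dep (V1 \<B>) (E - {m}) \<tau>}"
        unfolding A v0 using dep_empty by auto
    qed
  qed
  have part3: "lex_standard_complex E \<B> = lex_standard_complex (E - {m}) (con_bases \<B> m)"
    if lo: "is_loop \<B> m"
  proof -
    have v1: "V1 \<B> = {}" using lo unfolding V1_def is_loop_def by auto
    have v0: "V0 \<B> = \<B>" using lo unfolding V0_def is_loop_def by auto
    have c: "con_bases \<B> m = V0 \<B>" unfolding con_bases_def using lo v0 by simp
    show ?thesis unfolding c L(2)
    proof (intro set_eqI)
      fix \<tau>
      show "\<tau> \<in> lex_standard_complex E \<B> \<longleftrightarrow> \<tau> \<in> {\<tau>. \<tau> \<subseteq> E - {m} \<and> \<not> dep (V0 \<B>) (E - {m}) \<tau>}"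
        unfolding A v1 using dep_empty by auto
    qed
  qed
  show ?thesis using part1 part2 part3 by blast
qed


end
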